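(* Let $d\ge2$, let $a:\mathbb{Z}^d\curvearrowright X$ be a free Borel action, let $S=\{\pm e_1,\dots,\pm e_d\}$ be the standard generating set of $\mathbb{Z}^d$, and let $U''$ be a single $\mathbb{Z}^d$-orbit. Let $U,V\subseteq U''$ be such that the $G(a,S)$-path distance between $U$ and $V$ is greater than $4d+1$, and let $c$ be an edge coloring of $G(a,S)\upharpoonright(U\cup V)$ with colors $\{1,\dots,2d\}$ which follows protocol $x_0$ on $U$ and protocol $x_1$ on $V$, for some $x_0,x_1\in U''$. Then $c$ can be extended to an edge coloring of $G(a,S)\upharpoonright U''$ with colors $\{1,\dots,2d\}$ which still follows protocol $x_0$ on $U$ and protocol $x_1$ on $V$.
   Context: $e_i\in\mathbb{Z}^d$ has $1$ in coordinate $i$ and $0$ elsewhere. $G(a,S)$ is the Schreier graph: $x,y$ adjacent iff $y=\gamma\cdot x$ for some $\gamma\in S$; each edge has the unique form $(x,e_i\cdot x)$. An edge coloring gives distinct colors to edges sharing a vertex. Protocol: for $U\subseteq U'\subseteq U''$, an edge coloring $c$ of $G(a,S)\upharpoonright U'$ and $x_0\in U''$, $c$ follows protocol $x_0$ on $U$ if every edge $(x,e_i\cdot x)$ of $G(a,S)\upharpoonright U'$ meeting $U$ receives color $2i-1$ if $a_i$ is even and color $2i$ if $a_i$ is odd, where $(a_1,\dots,a_d)\in\mathbb{Z}^d$ is the unique element with $(a_1,\dots,a_d)\cdot x_0=x$. *)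

theory Defs
  imports "HOL-Analysis.Analysis"
begin

definition Zd :: "nat \<Rightarrow> (nat \<Rightarrow> int) set" where
  "Zd d = {g. \<forall>i. g i \<noteq> 0 \<longrightarrow> i \<in> {1..d}}"

definition unitvec :: "nat \<Rightarrow> (nat \<Rightarrow> int)" where
  "unitvec i = (\<lambda>j. if j = i then 1 else 0)"

definition is_action :: "nat \<Rightarrow> 'x set \<Rightarrow> ((nat \<Rightarrow> int) \<Rightarrow> 'x \<Rightarrow> 'x) \<Rightarrow> bool" where
  "is_action d X a \<longleftrightarrow>
     (\<forall>g\<in>Zd d. \<forall>x\<in>X. a g x \<in> X) \<and>
     (\<forall>x\<in>X. a (\<lambda>_. 0) x = x) \<and>
     (\<forall>g\<in>Zd d. \<forall>h\<in>Zd d. \<forall>x\<in>X. a (\<lambda>j. g j + h j) x = a g (a h x))"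

definition free_action :: "nat \<Rightarrow> 'x set \<Rightarrow> ((nat \<Rightarrow> int) \<Rightarrow> 'x \<Rightarrow> 'x) \<Rightarrow> bool" where
  "free_action d X a \<longleftrightarrow> is_action d X a \<and> (\<forall>g\<in>Zd d. \<forall>x\<in>X. a g x = x \<longrightarrow> g = (\<lambda>_. 0))"

definition orbit :: "nat \<Rightarrow> ((nat \<Rightarrow> int) \<Rightarrow> 'x \<Rightarrow> 'x) \<Rightarrow> 'x \<Rightarrow> 'x set" where
  "orbit d a x = {a g x | g. g \<in> Zd d}"

definition schreier_adj :: "nat \<Rightarrow> 'x set \<Rightarrow> ((nat \<Rightarrow> int) \<Rightarrow> 'x \<Rightarrow> 'x) \<Rightarrow> ('x \<times> 'x) set" where
  "schreier_adj d X a = {(x, y). x \<in> X \<and> y \<in> X \<and>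
      (\<exists>i\<in>{1..d}. y = a (unitvec i) x \<or> y = a (\<lambda>j. - unitvec i j) x)}"

definition path_dist_gt :: "nat \<Rightarrow> 'x set \<Rightarrow> ((nat \<Rightarrow> int) \<Rightarrow> 'x \<Rightarrow> 'x) \<Rightarrow> 'x set \<Rightarrow> 'x set \<Rightarrow> nat \<Rightarrow> bool" where
  "path_dist_gt d X a U V r \<longleftrightarrow>
     (\<forall>u\<in>U. \<forall>v\<in>V. \<forall>n\<le>r. (u, v) \<notin> (schreier_adj d X a) ^^ n)"

text \<open>Edges of \<open>G(a,S)\<restriction>U'\<close>: the edge \<open>(x, e_i\<cdot>x)\<close> is represented by the pair \<open>(x,i)\<close>.\<close>
definition sedges :: "nat \<Rightarrow> ((nat \<Rightarrow> int) \<Rightarrow> 'x \<Rightarrow> 'x) \<Rightarrow> 'x set \<Rightarrow> ('x \<times> nat) set" where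
  "sedges d a U' = {(x, i). i \<in> {1..d} \<and> x \<in> U' \<and> a (unitvec i) x \<in> U'}"

definition sends :: "((nat \<Rightarrow> int) \<Rightarrow> 'x \<Rightarrow> 'x) \<Rightarrow> 'x \<times> nat \<Rightarrow> 'x set" where
  "sends a e = {fst e, a (unitvec (snd e)) (fst e)}"

definition is_edge_coloring ::
  "nat \<Rightarrow> ((nat \<Rightarrow> int) \<Rightarrow> 'x \<Rightarrow> 'x) \<Rightarrow> 'x set \<Rightarrow> nat \<Rightarrow> ('x \<times> nat \<Rightarrow> nat) \<Rightarrow> bool" where
  "is_edge_coloring d a U' k c \<longleftrightarrow>
     (\<forall>e\<in>sedges d a U'. c e \<in> {1..k}) \<and>
     (\<forall>e\<in>sedges d a U'. \<forall>f\<in>sedges d a U'.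
        e \<noteq> f \<and> sends a e \<inter> sends a f \<noteq> {} \<longrightarrow> c e \<noteq> c f)"

definition coords :: "nat \<Rightarrow> ((nat \<Rightarrow> int) \<Rightarrow> 'x \<Rightarrow> 'x) \<Rightarrow> 'x \<Rightarrow> 'x \<Rightarrow> (nat \<Rightarrow> int)" where
  "coords d a x0 x = (THE g. g \<in> Zd d \<and> a g x0 = x)"

definition follows_protocol ::
  "nat \<Rightarrow> ((nat \<Rightarrow> int) \<Rightarrow> 'x \<Rightarrow> 'x) \<Rightarrow> 'x set \<Rightarrow> ('x \<times> nat \<Rightarrow> nat) \<Rightarrow> 'x \<Rightarrow> 'x set \<Rightarrow> bool" where
  "follows_protocol d a U' c x0 U \<longleftrightarrow>
     (\<forall>(x, i)\<in>sedges d a U'. (x \<in> U \<or> a (unitvec i) x \<in> U) \<longrightarrow>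
        c (x, i) = (if even (coords d a x0 x i) then 2 * i - 1 else 2 * i))"

end

theory Submission
  imports Defs
begin

definition shift :: "nat \<Rightarrow> int \<Rightarrow> (nat \<Rightarrow> int) \<Rightarrow> (nat \<Rightarrow> int)" where
  "shift k t g = g(k := g k + t)"

lemma shift_same[simp]: "shift k t g k = g k + t"
  by (simp add: shift_def)
lemma shift_other[simp]: "j \<noteq> k \<Longrightarrow> shift k t g j = g j"
  by (simp add: shift_def)
lemma shift_shift[simp]: "shift k s (shift k t g) = shift k (t + s) g"
  by (simp add: shift_def add.assoc)
lemma shift_0[simp]: "shift k 0 g = g"
  by (simp add: shift_def)
lemma shift_comm: "j \<noteq> k \<Longrightarrow> shift j s (shift k t g) = shift k t (shift j s g)"
  by (auto simp add: shift_def fun_eq_iff)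
lemma shift_upd: "j \<noteq> k \<Longrightarrow> shift k t (g(j := v)) = (shift k t g)(j := v)"
  by (auto simp add: shift_def fun_eq_iff)

definition innL :: "(int \<Rightarrow> bool) \<Rightarrow> int \<Rightarrow> bool" where
  "innL f t \<longleftrightarrow> f t \<and> (f (t - 1) \<or> f (t + 1))"
definition SL :: "(int \<Rightarrow> bool) \<Rightarrow> int \<Rightarrow> bool" where
  "SL f t \<longleftrightarrow> innL f t \<or> (innL f (t - 1) \<and> innL f (t + 1))"

lemma SL_change: "SL f t \<noteq> SL f (t+1) \<Longrightarrow> f t \<noteq> f (t+1) \<and> SL f (t - 1) = SL f t \<and> SL f (t+1) = SL f (t+2)"
  unfolding SL_def innL_def by (auto simp: algebra_simps)

lemma SL_in: "f (t - 1) \<Longrightarrow> f t \<Longrightarrow> f (t+1) \<Longrightarrow> SL f t"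
  unfolding SL_def innL_def by auto
lemma SL_out: "\<not> f (t - 1) \<Longrightarrow> \<not> f t \<Longrightarrow> \<not> f (t+1) \<Longrightarrow> \<not> SL f t"
  unfolding SL_def innL_def by auto
lemma SL_shift: "SL (\<lambda>t. f (s + t)) u = SL f (s + u)"
  unfolding SL_def innL_def by (simp add: algebra_simps)


lemma cls_eq: "c \<in> {2*a-1, 2*a} \<Longrightarrow> (a::nat) \<ge> 1 \<Longrightarrow> (c + 1) div 2 = a"
  by auto

lemma abstract_distinct:
  fixes col :: "nat \<Rightarrow> bool \<Rightarrow> nat"
  assumes k1: "k \<ge> 1" and j1: "j \<ge> 1" and kj: "k \<noteq> j"
  and N: "\<And>m s. m \<in> M \<Longrightarrow> m \<noteq> k \<Longrightarrow> m \<noteq> j \<Longrightarrow> m \<ge> 1 \<and> col m s \<in> {2*m-1,2*m} \<and> col m True \<noteq> col m False"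
  and s1: "col k sk \<in> {2*k-1,2*k}" and s2: "col k (\<not>sk) \<in> {2*j-1,2*j}"
  and s3: "col j sj \<in> {2*k-1,2*k}" and s4: "col j (\<not>sj) \<in> {2*j-1,2*j}"
  and s5: "col k sk \<noteq> col j sj" and s6: "col k (\<not>sk) \<noteq> col j (\<not>sj)"
  and m: "m \<in> M" and m': "m' \<in> M" and ne: "(m,s) \<noteq> (m',s')"
  shows "col m s \<noteq> col m' s'"
proof
  assume eq: "col m s = col m' s'"
  define cl where "cl m s = (if m = k then (if s = sk then k else j) else if m = j then (if s = sj then k else j) else m)" for m s
  have C: "col m s \<in> {2*cl m s-1, 2*cl m s} \<and> cl m s \<ge> 1" if "m \<in> M" for m s
  proof (cases "m = k \<or> m = j")
    case True
    then show ?thesis using s1 s2 s3 s4 k1 j1 kj unfolding cl_def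
      by (cases "s = sk"; cases "s = sj") (auto simp del: insert_iff)
  next
    case False
    then show ?thesis using N[OF that] unfolding cl_def by auto
  qed
  have a1: "(col m s + 1) div 2 = cl m s" using C[OF m, of s] by (intro cls_eq) auto
  have a2: "(col m' s' + 1) div 2 = cl m' s'" using C[OF m', of s'] by (intro cls_eq) auto
  have "cl m s = cl m' s'" using a1 a2 eq by simp
  then show False using ne eq s5 s6 kj N[OF m] N[OF m'] unfolding cl_def
    by (cases s; cases s'; cases sk; cases sj; auto split: if_splits)
qed

locale core =
  fixes d :: nat and D :: "(nat \<Rightarrow> int) \<Rightarrow> nat" and \<delta> :: "nat \<Rightarrow> int"
  assumes d2: "d \<ge> 2"
  and lip1: "\<And>g m. m \<in> {1..d} \<Longrightarrow> D (shift m 1 g) \<le> D g + 1"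
  and lip2: "\<And>g m. m \<in> {1..d} \<Longrightarrow> D g \<le> D (shift m 1 g) + 1"
begin

definition rr :: "nat \<Rightarrow> nat" where "rr k = 4*k - 2"
definition pt :: "nat \<Rightarrow> nat" where "pt k = (if k = 1 then 2 else 1)"
definition blk :: "nat \<Rightarrow> (nat\<Rightarrow>int) \<Rightarrow> (nat \<Rightarrow> int)" where "blk j g = g(j := 2 * (g j div 2))"
definition hh :: "nat \<Rightarrow> (nat \<Rightarrow> int) \<Rightarrow> nat" where
  "hh k g = min (D (blk (pt k) g)) (D (shift (pt k) 1 (blk (pt k) g)))"
definition FF :: "nat \<Rightarrow> (nat\<Rightarrow>int) \<Rightarrow> int \<Rightarrow> bool" where
  "FF k g t \<longleftrightarrow> hh k (shift k t g) \<le> rr k"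
definition SS :: "nat \<Rightarrow> (nat \<Rightarrow> int) \<Rightarrow> bool" where "SS k g \<longleftrightarrow> SL (FF k g) 0"
definition sw :: "nat \<Rightarrow> bool" where "sw k \<longleftrightarrow> odd (\<delta> k)"
definition bd :: "nat \<Rightarrow> (nat \<Rightarrow> int) \<Rightarrow> bool" where "bd k g \<longleftrightarrow> sw k \<and> (SS k g \<noteq> SS k (shift k 1 g))"
definition GG :: "nat \<Rightarrow> (nat \<Rightarrow> int) \<Rightarrow> bool" where "GG k g \<longleftrightarrow> bd k g \<or> bd k (shift k (-1) g)"
definition AA :: "nat \<Rightarrow> (nat\<Rightarrow>int) \<Rightarrow> nat" where "AA k x = (if even (x k) then 2*k-1 else 2*k)"
definition BB :: "nat \<Rightarrow> (nat\<Rightarrow>int) \<Rightarrow> nat" where "BB k x = (if even (x k - \<delta> k) then 2*k-1 else 2*k)"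
definition NN :: "nat \<Rightarrow> (nat\<Rightarrow>int) \<Rightarrow> nat" where "NN k x = (if SS k x then AA k x else BB k x)"
definition kk :: "(nat\<Rightarrow>int) \<Rightarrow> nat" where "kk g = (D g + 2) div 4"
definition CC :: "(nat \<Rightarrow> int) \<Rightarrow> nat \<Rightarrow> nat" where
 "CC g m = (if bd m g then NN (pt m) (blk (pt m) g)
    else if even (g m) \<and> kk g \<in> {1..d} \<and> pt (kk g) = m \<and> GG (kk g) g
      then (if bd (kk g) g then NN (kk g) (shift (kk g) 1 g) else NN (kk g) (shift (kk g) (-2) g))
    else NN m g)"
definition ecol :: "(nat \<Rightarrow> int) \<Rightarrow> nat \<Rightarrow> bool \<Rightarrow> nat" where
  "ecol g m s = (if s then CC g m else CC (shift m (-1) g) m)"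

lemma pt_range: "k \<in> {1..d} \<Longrightarrow> pt k \<in> {1..d}"
  using d2 by (auto simp: pt_def)
lemma pt_ne: "pt k \<noteq> k"
  by (auto simp: pt_def)

lemma lipm1: "m \<in> {1..d} \<Longrightarrow> D (shift m (-1) g) \<le> D g + 1"
  using lip2[of m "shift m (-1) g"] by simp
lemma lipm2: "m \<in> {1..d} \<Longrightarrow> D g \<le> D (shift m (-1) g) + 1"
  using lip1[of m "shift m (-1) g"] by simp

lemma blk_even: "even (g j) \<Longrightarrow> blk j g = g"
  by (auto simp: blk_def fun_eq_iff elim!: evenE)
lemma blk_odd: "odd (g j) \<Longrightarrow> blk j g = shift j (-1) g"
  by (auto simp: blk_def shift_def fun_eq_iff elim!: oddE)
lemma blk_j[simp]: "blk j g j = 2 * (g j div 2)"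
  by (simp add: blk_def)

lemma D_blk: "j \<in> {1..d} \<Longrightarrow> D (blk j g) \<le> D g + 1 \<and> D g \<le> D (blk j g) + 1"
  using lipm1[of j g] lipm2[of j g] by (cases "even (g j)") (auto simp: blk_even blk_odd)

lemma hh_le: "k \<in> {1..d} \<Longrightarrow> hh k g \<le> D g \<and> D g \<le> hh k g + 1"
proof -
  assume k: "k \<in> {1..d}"
  define j where "j = pt k"
  have j: "j \<in> {1..d}" using pt_range[OF k] j_def by simp
  show ?thesis
  proof (cases "even (g j)")
    case True
    then show ?thesis using lip2[OF j, of g] by (simp add: hh_def j_def[symmetric] blk_even)
  next
    case False
    then show ?thesis using lipm2[OF j, of g] by (simp add: hh_def j_def[symmetric] blk_odd)
  qed
qed

lemma blk_shift: "j \<noteq> k \<Longrightarrow> blk j (shift k t g) = shift k t (blk j g)"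
  by (simp add: blk_def shift_upd)

lemma hh_lip: "k \<in> {1..d} \<Longrightarrow> hh k (shift k 1 g) \<le> hh k g + 1 \<and> hh k g \<le> hh k (shift k 1 g) + 1"
proof -
  assume k: "k \<in> {1..d}"
  have ne: "pt k \<noteq> k" by (rule pt_ne)
  have e1: "blk (pt k) (shift k 1 g) = shift k 1 (blk (pt k) g)" using ne by (rule blk_shift)
  have e2: "shift (pt k) 1 (shift k 1 (blk (pt k) g)) = shift k 1 (shift (pt k) 1 (blk (pt k) g))"
    using ne by (rule shift_comm)
  show ?thesis unfolding hh_def e1 e2
    using lip1[OF k, of "blk (pt k) g"] lip2[OF k, of "blk (pt k) g"]
      lip1[OF k, of "shift (pt k) 1 (blk (pt k) g)"] lip2[OF k, of "shift (pt k) 1 (blk (pt k) g)"]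
    by linarith
qed

lemma hh_lipm: "k \<in> {1..d} \<Longrightarrow> hh k (shift k (-1) g) \<le> hh k g + 1 \<and> hh k g \<le> hh k (shift k (-1) g) + 1"
  using hh_lip[of k "shift k (-1) g"] by simp

lemma FF_shift: "FF k (shift k s g) = (\<lambda>t. FF k g (s + t))"
  by (simp add: FF_def fun_eq_iff add.commute)

lemma SS_shift: "SS k (shift k s g) = SL (FF k g) s"
  unfolding SS_def FF_shift using SL_shift[of "FF k g" s 0] by simp

lemma FF_blockinv: "v div 2 = g (pt k) div 2 \<Longrightarrow> FF k (g(pt k := v)) = FF k g"
proof -
  assume v: "v div 2 = g (pt k) div 2"
  have ne: "pt k \<noteq> k" by (rule pt_ne)
  have "hh k (shift k t (g(pt k := v))) = hh k (shift k t g)" for t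
  proof -
    have "shift k t (g(pt k := v)) = (shift k t g)(pt k := v)" using ne by (rule shift_upd)
    moreover have "blk (pt k) ((shift k t g)(pt k := v)) = blk (pt k) (shift k t g)"
      using v ne by (simp add: blk_def)
    ultimately show ?thesis by (simp add: hh_def)
  qed
  then show ?thesis by (simp add: FF_def fun_eq_iff)
qed

lemma SS_blockinv: "v div 2 = g (pt k) div 2 \<Longrightarrow> SS k (g(pt k := v)) = SS k g"
  by (simp add: SS_def FF_blockinv)

lemma bd_FF: "bd k g \<longleftrightarrow> sw k \<and> SL (FF k g) 0 \<noteq> SL (FF k g) 1"
  unfolding bd_def SS_shift by (simp add: SS_def)

lemma bd_blockinv: "v div 2 = g (pt k) div 2 \<Longrightarrow> bd k (g(pt k := v)) = bd k g"
  unfolding bd_FF by (simp add: FF_blockinv)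

lemma GG_blockinv: "v div 2 = g (pt k) div 2 \<Longrightarrow> GG k (g(pt k := v)) = GG k g"
proof -
  assume v: "v div 2 = g (pt k) div 2"
  have ne: "pt k \<noteq> k" by (rule pt_ne)
  have "shift k (-1) (g(pt k := v)) = (shift k (-1) g)(pt k := v)" using ne by (rule shift_upd)
  moreover have "v div 2 = shift k (-1) g (pt k) div 2" using v ne by simp
  ultimately show ?thesis using v by (simp add: GG_def bd_blockinv)
qed

lemma NN_blockinv: "v div 2 = g (pt k) div 2 \<Longrightarrow> NN k (g(pt k := v)) = NN k g"
  using pt_ne[of k] by (simp add: NN_def SS_blockinv AA_def BB_def)


lemma bd_shift: "bd k (shift k s g) \<longleftrightarrow> sw k \<and> SL (FF k g) s \<noteq> SL (FF k g) (s+1)"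
  by (simp add: bd_def SS_shift add.commute)

lemma bd_zone: assumes k: "k \<in> {1..d}" and b: "bd k g"
  shows "rr k \<le> D g \<and> D g \<le> rr k + 2 \<and> rr k \<le> D (shift k 1 g) \<and> D (shift k 1 g) \<le> rr k + 2"
proof -
  have "SL (FF k g) 0 \<noteq> SL (FF k g) (0+1)" using b by (simp add: bd_FF)
  then have "FF k g 0 \<noteq> FF k g (0+1)" using SL_change by blast
  then have "(hh k g \<le> rr k) \<noteq> (hh k (shift k 1 g) \<le> rr k)" by (simp add: FF_def)
  then show ?thesis using hh_lip[OF k, of g] hh_le[OF k, of g] hh_le[OF k, of "shift k 1 g"] by linarith
qed

lemma GG_zone: assumes k: "k \<in> {1..d}" and G: "GG k g"
  shows "rr k \<le> D g \<and> D g \<le> rr k + 2"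
  using G bd_zone[OF k, of g] bd_zone[OF k, of "shift k (-1) g"] by (auto simp: GG_def)

lemma GG_near: assumes k: "k \<in> {1..d}" and m: "m \<in> {1..d}" and G: "GG m z"
  and l: "4*k - 3 \<le> D z" and u: "D z \<le> 4*k+1"
  shows "m = k"
  using GG_zone[OF m G] l u k m by (auto simp: rr_def)

lemma kk_GG: assumes k: "k \<in> {1..d}" and G: "GG k g" shows "kk g = k"
proof -
  have "4*k - 2 \<le> D g" "D g \<le> 4*k" using GG_zone[OF k G] k by (auto simp: rr_def)
  then show ?thesis using k unfolding kk_def by (auto intro!: div_nat_eqI) 
qed

lemma SS_low: assumes j: "j \<in> {1..d}" and l: "D z + 1 \<le> rr j" shows "SS j z"
proof -
  have "FF j z (0 - 1)" "FF j z 0" "FF j z (0+1)"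
    using hh_lipm[OF j, of z] hh_lip[OF j, of z] hh_le[OF j, of z] l by (auto simp: FF_def)
  then show ?thesis unfolding SS_def by (rule SL_in)
qed

lemma SS_high: assumes j: "j \<in> {1..d}" and l: "rr j + 3 \<le> D z" shows "\<not> SS j z"
proof -
  have "\<not> FF j z (0 - 1)" "\<not> FF j z 0" "\<not> FF j z (0+1)"
    using hh_lipm[OF j, of z] hh_lip[OF j, of z] hh_le[OF j, of z] l by (auto simp: FF_def)
  then show ?thesis unfolding SS_def by (rule SL_out)
qed

lemma SS_near: assumes k: "k \<in> {1..d}" and j: "j \<in> {1..d}" and jk: "j \<noteq> k"
  and l: "4*k - 3 \<le> D z" and u: "D z \<le> 4*k+1"
  shows "SS j z = (k < j)"
proof (cases "k < j")
  case True
  then have "D z + 1 \<le> rr j" using l u k by (auto simp: rr_def)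
  then show ?thesis using SS_low[OF j] True by simp
next
  case False
  then have "rr j + 3 \<le> D z" using l u k j jk by (auto simp: rr_def)
  then show ?thesis using SS_high[OF j] False by simp
qed

lemma thick: assumes b: "bd k g" shows "\<not> bd k (shift k (-1) g) \<and> \<not> bd k (shift k 1 g)"
proof -
  have "SL (FF k g) 0 \<noteq> SL (FF k g) (0+1)" using b by (simp add: bd_FF)
  from SL_change[OF this] show ?thesis using bd_shift[of k "-1" g] bd_shift[of k 1 g] by simp
qed

lemma CC_normal: "\<not> bd m x \<Longrightarrow> \<not> (even (x m) \<and> kk x \<in> {1..d} \<and> pt (kk x) = m \<and> GG (kk x) x) \<Longrightarrow> CC x m = NN m x"
  unfolding CC_def by auto

lemma NN_range: "NN m x \<in> {2*m-1, 2*m}"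
  by (simp add: NN_def AA_def BB_def)

lemma normal_dir: assumes m: "m \<in> {1..d}" and nG: "\<not> GG m g"
  and nb: "\<forall>k\<in>{1..d}. GG k g \<longrightarrow> pt k \<noteq> m"
  shows "ecol g m True \<in> {2*m-1, 2*m} \<and> ecol g m False \<in> {2*m-1, 2*m} \<and> ecol g m True \<noteq> ecol g m False"
proof -
  define x where "x = shift m (-1) g"
  have gx: "g = shift m 1 x" by (simp add: x_def)
  have u: "ecol g m True = NN m g"
    unfolding ecol_def using nG nb by (simp, intro CC_normal) (auto simp: GG_def)
  have nbx: "\<not> bd m x" using nG by (simp add: GG_def x_def)
  have "\<not> (even (x m) \<and> kk x \<in> {1..d} \<and> pt (kk x) = m \<and> GG (kk x) x)"
  proof
    assume h: "even (x m) \<and> kk x \<in> {1..d} \<and> pt (kk x) = m \<and> GG (kk x) x"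
    have "(x m + 1) div 2 = x m div 2" using h by (auto elim!: evenE)
    then have "GG (kk x) (x(pt (kk x) := x m + 1)) = GG (kk x) x" using h by (intro GG_blockinv) simp
    moreover have "x(pt (kk x) := x m + 1) = g" using h gx by (simp add: shift_def)
    ultimately show False using h nb by auto
  qed
  then have dn: "ecol g m False = NN m x" unfolding ecol_def x_def[symmetric] using nbx by (simp, intro CC_normal) auto
  have "NN m g \<noteq> NN m x"
  proof (cases "sw m")
    case True
    then have "SS m x = SS m g" using nbx gx by (simp add: bd_def)
    then show ?thesis using m by (auto simp: NN_def AA_def BB_def x_def even_diff)
  next
    case False
    then show ?thesis using m by (auto simp: NN_def AA_def BB_def x_def sw_def even_diff)
  qed
  then show ?thesis using u dn NN_range by auto
qed

lemma gadget_dir: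
  assumes k: "k \<in> {1..d}" and G: "GG k g"
  shows "\<exists>sk sj. ecol g k sk \<in> {2*k-1,2*k} \<and> ecol g k (\<not>sk) \<in> {2*pt k-1,2*pt k}
     \<and> ecol g (pt k) sj \<in> {2*k-1,2*k} \<and> ecol g (pt k) (\<not>sj) \<in> {2*pt k-1,2*pt k}
     \<and> ecol g k sk \<noteq> ecol g (pt k) sj \<and> ecol g k (\<not>sk) \<noteq> ecol g (pt k) (\<not>sj)"
proof -
  define j where "j = pt k"
  have j: "j \<in> {1..d}" "j \<noteq> k" using pt_range[OF k] pt_ne j_def by auto
  have k1: "1 \<le> k" using k by simp
  have sw: "sw k" using G by (auto simp: GG_def bd_def)
  then have dodd: "odd (\<delta> k)" by (simp add: sw_def)
  have Dg: "4*k-2 \<le> D g" "D g \<le> 4*k" using GG_zone[OF k G] k1 by (auto simp: rr_def)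
  define b where "b = blk j g"
  have bg: "b = g(pt k := 2*(g j div 2))" by (simp add: b_def blk_def j_def)
  have bdiv: "2*(g j div 2) div 2 = g (pt k) div 2" by (simp add: j_def)
  have Gb: "GG k b" using GG_blockinv[of "2*(g j div 2)" g k, OF bdiv] G bg by simp
  have Db0: "D b \<le> D g + 1" "D g \<le> D b + 1" using D_blk[OF j(1), of g] b_def by auto
  have Db: "4*k-3 \<le> D b" "D b \<le> 4*k+1" using Db0 Dg k1 by arith+
  have nbdb: "\<not> bd j b"
  proof
    assume "bd j b" then have "GG j b" by (simp add: GG_def)
    then show False using GG_near[OF k j(1) _ Db] j(2) by simp
  qed
  have kkb: "kk b = k" by (rule kk_GG[OF k Gb])
  have bdkb: "bd k b = bd k g" using bd_blockinv[of "2*(g j div 2)" g k, OF bdiv] bg by simp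
  have NNb: "NN k (shift k t b) = NN k (shift k t g)" for t
  proof -
    have "shift k t b = (shift k t g)(pt k := 2*(g j div 2))" using bg pt_ne[of k] by (simp add: shift_upd)
    moreover have "2*(g j div 2) div 2 = (shift k t g) (pt k) div 2" using pt_ne[of k] by (simp add: j_def)
    ultimately show ?thesis using NN_blockinv by simp
  qed
  have Cb: "CC b j = (if bd k g then NN k (shift k 1 g) else NN k (shift k (-2) g))"
    using nbdb kkb Gb k j_def bdkb NNb by (simp add: CC_def b_def)
  have eb: "ecol g j (even (g j)) = CC b j"
    by (cases "even (g j)") (simp_all add: ecol_def b_def blk_even blk_odd)
  define x' where "x' = (if even (g j) then shift j (-1) g else g)"
  have ex: "ecol g j (\<not> even (g j)) = CC x' j" by (simp add: ecol_def x'_def)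
  have x'odd: "odd (x' j)" by (simp add: x'_def)
  have Dx0: "D x' \<le> D g + 1" "D g \<le> D x' + 1" using lipm1[OF j(1), of g] lipm2[OF j(1), of g] by (auto simp: x'_def)
  have Dx: "4*k-3 \<le> D x'" "D x' \<le> 4*k+1" using Dx0 Dg k1 by arith+
  have nbdx: "\<not> bd j x'"
  proof
    assume "bd j x'" then have "GG j x'" by (simp add: GG_def)
    then show False using GG_near[OF k j(1) _ Dx] j(2) by simp
  qed
  have Cx: "CC x' j = NN j x'" using nbdx x'odd by (intro CC_normal) auto
  have Sx: "SS j x' = (k < j)" using SS_near[OF k j(1) j(2) Dx] .
  have Sb: "SS j b = (k < j)" using SS_near[OF k j(1) j(2) Db] .
  have bjeven: "even (b j)" by (simp add: b_def)
  have mid: "NN j b \<noteq> NN j x'" using Sx Sb bjeven x'odd j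
    by (auto simp: NN_def AA_def BB_def even_diff even_add)
  show ?thesis
  proof (cases "bd k g")
    case True
    define y where "y = shift k (-1) g"
    have nby: "\<not> bd k y" using thick[OF True] y_def by simp
    have Dy0: "D y \<le> D g + 1" "D g \<le> D y + 1" using lipm1[OF k, of g] lipm2[OF k, of g] by (auto simp: y_def)
    have Dy: "4*k-3 \<le> D y" "D y \<le> 4*k+1" using Dy0 Dg k1 by arith+
    have Cy: "CC y k = NN k y"
    proof (rule CC_normal[OF nby])
      show "\<not> (even (y k) \<and> kk y \<in> {1..d} \<and> pt (kk y) = k \<and> GG (kk y) y)"
      proof
        assume h: "even (y k) \<and> kk y \<in> {1..d} \<and> pt (kk y) = k \<and> GG (kk y) y"
        then have "kk y = k" using GG_near[OF k _ _ Dy] by blast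
        then show False using h pt_ne[of k] by simp
      qed
    qed
    have Cg: "CC g k = NN j b" using True by (simp add: CC_def j_def b_def)
    have Sy: "SS k y = SS k g" using nby sw by (simp add: bd_def y_def)
    have Sg: "SS k g \<noteq> SS k (shift k 1 g)" using True by (simp add: bd_def)
    have kk: "NN k y \<noteq> NN k (shift k 1 g)" using Sy Sg dodd k1
      by (auto simp: NN_def AA_def BB_def even_diff even_add y_def)
    show ?thesis
      apply (rule exI[of _ False], rule exI[of _ "even (g j)"])
      using eb ex Cb Cx Cy Cg kk mid NN_range[of k] NN_range[of j]
      by (simp add: ecol_def y_def[symmetric] j_def[symmetric] True)
  next
    case False
    define y where "y = shift k (-1) g"
    have bdy: "bd k y" using G False by (simp add: GG_def y_def)
    have gy: "shift k 1 y = g" by (simp add: y_def)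
    have Dy: "4*k-2 \<le> D y" "D y \<le> 4*k" using bd_zone[OF k bdy] k1 by (auto simp: rr_def)
    define b' where "b' = blk j y"
    have Db'0: "D b' \<le> D y + 1" "D y \<le> D b' + 1" using D_blk[OF j(1), of y] b'_def by auto
    have Db': "4*k-3 \<le> D b'" "D b' \<le> 4*k+1" using Db'0 Dy k1 by arith+
    have Sb': "SS j b' = (k < j)" using SS_near[OF k j(1) j(2) Db'] .
    have Cy: "CC y k = NN j b'" using bdy by (simp add: CC_def j_def b'_def)
    have b'j: "b' j = b j" using j(2) by (simp add: b'_def b_def y_def)
    have mid': "NN j b' \<noteq> NN j x'" using Sx Sb' bjeven b'j x'odd j
      by (auto simp: NN_def AA_def BB_def even_diff even_add)
    have Cg: "CC g k = NN k g"
    proof (rule CC_normal[OF False])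
      show "\<not> (even (g k) \<and> kk g \<in> {1..d} \<and> pt (kk g) = k \<and> GG (kk g) g)"
        using kk_GG[OF k G] pt_ne by auto
    qed
    have nb2: "\<not> bd k (shift k (-1) y)" using thick[OF bdy] by simp
    have S2: "SS k (shift k (-2) g) = SS k y" using nb2 sw by (simp add: bd_def y_def)
    have Sy: "SS k y \<noteq> SS k g" using bdy gy by (simp add: bd_def)
    have kk: "NN k g \<noteq> NN k (shift k (-2) g)" using S2 Sy dodd k1
      by (auto simp: NN_def AA_def BB_def even_diff even_add)
    show ?thesis
      apply (rule exI[of _ True], rule exI[of _ "even (g j)"])
      using eb ex Cb Cx Cy Cg kk mid' NN_range[of k] NN_range[of j]
      by (simp add: ecol_def y_def[symmetric] j_def[symmetric] False)
  qed
qed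

theorem vertex_distinct:
  assumes m: "m \<in> {1..d}" and m': "m' \<in> {1..d}" and ne: "(m,s) \<noteq> (m',s')"
  shows "ecol g m s \<noteq> ecol g m' s'"
proof (cases "\<exists>k\<in>{1..d}. GG k g")
  case False
  have N: "ecol g m s \<in> {2*m-1, 2*m} \<and> ecol g m True \<noteq> ecol g m False" if "m \<in> {1..d}" for m s
    using normal_dir[OF that] False that by (cases s) auto
  show ?thesis
  proof (cases "m = m'")
    case True
    then have "s \<noteq> s'" using ne by simp
    then show ?thesis using N[OF m] True by (cases s; cases s') auto
  next
    case False
    then show ?thesis using N[OF m, of s] N[OF m', of s'] m m' by auto
  qed
next
  case True
  then obtain k where k: "k \<in> {1..d}" and G: "GG k g" by blast
  have Dg: "4*k-3 \<le> D g" "D g \<le> 4*k+1" using GG_zone[OF k G] k by (auto simp: rr_def)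
  have N: "mm \<ge> 1 \<and> ecol g mm s \<in> {2*mm-1,2*mm} \<and> ecol g mm True \<noteq> ecol g mm False"
    if mm: "mm \<in> {1..d}" and "mm \<noteq> k" and "mm \<noteq> pt k" for mm s
  proof -
    have nG: "\<not> GG mm g" using GG_near[OF k mm _ Dg] that by auto
    have nb: "\<forall>k'\<in>{1..d}. GG k' g \<longrightarrow> pt k' \<noteq> mm"
      using GG_near[OF k _ _ Dg] that by auto
    show ?thesis using normal_dir[OF mm nG nb] mm by (cases s) auto
  qed
  obtain sk sj where S: "ecol g k sk \<in> {2*k-1,2*k}" "ecol g k (\<not>sk) \<in> {2*pt k-1,2*pt k}"
     "ecol g (pt k) sj \<in> {2*k-1,2*k}" "ecol g (pt k) (\<not>sj) \<in> {2*pt k-1,2*pt k}"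
     "ecol g k sk \<noteq> ecol g (pt k) sj" "ecol g k (\<not>sk) \<noteq> ecol g (pt k) (\<not>sj)"
    using gadget_dir[OF k G] by blast
  show ?thesis
    by (rule abstract_distinct[where M="{1..d}", OF _ _ pt_ne[symmetric] N S m m' ne])
      (use k pt_range[OF k] in auto)
qed

theorem col_range: assumes m: "m \<in> {1..d}" shows "CC g m \<in> {1..2*d}"
proof -
  have r: "NN q x \<in> {1..2*d}" if "q \<in> {1..d}" for q x
    using NN_range[of q x] that by auto
  show ?thesis unfolding CC_def using r[OF m] r[OF pt_range[OF m]] r by auto
qed

theorem col_U: assumes m: "m \<in> {1..d}" and a: "D g \<le> 1" and b: "D (shift m 1 g) \<le> 1"
  shows "CC g m = AA m g"
proof -
  have "SS m g" "SS m (shift m 1 g)" using SS_low[OF m] a b m by (auto simp: rr_def)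
  moreover have "kk g = 0" using a by (simp add: kk_def)
  ultimately show ?thesis by (simp add: CC_def bd_def NN_def)
qed

theorem col_V: assumes m: "m \<in> {1..d}" and a: "4*d+1 \<le> D g" and b: "4*d+1 \<le> D (shift m 1 g)"
  shows "CC g m = BB m g"
proof -
  have "\<not> SS m g" "\<not> SS m (shift m 1 g)" using SS_high[OF m] a b m by (auto simp: rr_def)
  moreover have "\<not> GG (kk g) g" if "kk g \<in> {1..d}"
  proof
    assume "GG (kk g) g"
    from GG_zone[OF that this] have "D g \<le> 4 * kk g" using that by (auto simp: rr_def)
    then show False using a that by simp
  qed
  ultimately show ?thesis by (auto simp: CC_def bd_def NN_def)
qed
end


lemma Zd_add: "g \<in> Zd d \<Longrightarrow> h \<in> Zd d \<Longrightarrow> (\<lambda>j. g j + h j) \<in> Zd d"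
  by (auto simp: Zd_def) (metis add.right_neutral)+
lemma Zd_diff: "g \<in> Zd d \<Longrightarrow> h \<in> Zd d \<Longrightarrow> (\<lambda>j. g j - h j) \<in> Zd d"
  by (auto simp: Zd_def) (metis diff_0 diff_self neg_equal_0_iff_equal)+
lemma Zd_shift: "m \<in> {1..d} \<Longrightarrow> g \<in> Zd d \<Longrightarrow> shift m t g \<in> Zd d"
  by (auto simp: Zd_def shift_def)
lemma Zd_unit: "m \<in> {1..d} \<Longrightarrow> unitvec m \<in> Zd d"
  by (auto simp: Zd_def unitvec_def)
lemma Zd_munit: "m \<in> {1..d} \<Longrightarrow> (\<lambda>j. - unitvec m j) \<in> Zd d"
  by (auto simp: Zd_def unitvec_def)
lemma unit_plus: "(\<lambda>j. unitvec m j + h j) = shift m 1 h"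
  by (auto simp: unitvec_def shift_def fun_eq_iff)
lemma munit_plus: "(\<lambda>j. - unitvec m j + h j) = shift m (-1) h"
  by (auto simp: unitvec_def shift_def fun_eq_iff)

lemma munit_minus: "(\<lambda>j. h j - unitvec m j) = shift m (-1) h"
  by (auto simp: unitvec_def shift_def fun_eq_iff)

definition rs :: "nat \<Rightarrow> (nat \<Rightarrow> int) \<Rightarrow> (nat \<Rightarrow> int)" where
  "rs d g = (\<lambda>i. if i \<in> {1..d} then g i else 0)"
lemma rs_Zd: "rs d g \<in> Zd d" by (auto simp: rs_def Zd_def)
lemma rs_id: "g \<in> Zd d \<Longrightarrow> rs d g = g" by (auto simp: rs_def Zd_def fun_eq_iff)
lemma rs_shift: "m \<in> {1..d} \<Longrightarrow> rs d (shift m t g) = shift m t (rs d g)"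
  by (auto simp: rs_def shift_def fun_eq_iff)

theorem lemma7:
  fixes d :: nat and M :: "'x measure" and a :: "(nat \<Rightarrow> int) \<Rightarrow> 'x \<Rightarrow> 'x"
    and U'' U V :: "'x set" and c :: "'x \<times> nat \<Rightarrow> nat" and x0 x1 y :: 'x
  assumes "d \<ge> 2"
    and "free_action d (space M) a"
    and "\<forall>g\<in>Zd d. a g \<in> M \<rightarrow>\<^sub>M M"
    and "y \<in> space M" and "U'' = orbit d a y"
    and "U \<subseteq> U''" and "V \<subseteq> U''"
    and "path_dist_gt d (space M) a U V (4 * d + 1)"
    and "x0 \<in> U''" and "x1 \<in> U''"
    and "is_edge_coloring d a (U \<union> V) (2 * d) c"
    and "follows_protocol d a (U \<union> V) c x0 U"
    and "follows_protocol d a (U \<union> V) c x1 V"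
  shows "\<exists>c'. is_edge_coloring d a U'' (2 * d) c' \<and>
           (\<forall>e\<in>sedges d a (U \<union> V). c' e = c e) \<and>
           follows_protocol d a U'' c' x0 U \<and>
           follows_protocol d a U'' c' x1 V"
proof -
  define X where "X = space M"
  have A1: "\<And>g x. g \<in> Zd d \<Longrightarrow> x \<in> X \<Longrightarrow> a g x \<in> X"
    and A3: "\<And>g h x. g \<in> Zd d \<Longrightarrow> h \<in> Zd d \<Longrightarrow> x \<in> X \<Longrightarrow> a (\<lambda>j. g j + h j) x = a g (a h x)"
    and F: "\<And>g x. g \<in> Zd d \<Longrightarrow> x \<in> X \<Longrightarrow> a g x = x \<Longrightarrow> g = (\<lambda>_. 0)"
    using assms(2) unfolding free_action_def is_action_def X_def by blast+
  have yX: "y \<in> X" using assms(4) X_def by simp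
  obtain g0 where g0: "g0 \<in> Zd d" "x0 = a g0 y" using assms(9,5) by (auto simp: orbit_def)
  have x0X: "x0 \<in> X" using g0 A1 yX by simp
  define T where "T g = a g x0" for g
  have TX: "T g \<in> X" if "g \<in> Zd d" for g using A1 that x0X T_def by simp
  have Tu: "a (unitvec m) (T h) = T (shift m 1 h)" if "m \<in> {1..d}" "h \<in> Zd d" for m h
    using A3[OF Zd_unit[OF that(1)] that(2) x0X] by (simp add: T_def unit_plus)
  have Tmu: "a (\<lambda>j. - unitvec m j) (T h) = T (shift m (-1) h)" if "m \<in> {1..d}" "h \<in> Zd d" for m h
    using A3[OF Zd_munit[OF that(1)] that(2) x0X] by (simp add: T_def munit_plus munit_minus)
  have Tinj: "g = g'" if "g \<in> Zd d" "g' \<in> Zd d" "T g = T g'" for g g'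
  proof -
    have "a (\<lambda>j. (g j - g' j) + g' j) x0 = a (\<lambda>j. g j - g' j) (T g')"
      using A3[OF Zd_diff[OF that(1,2)] that(2) x0X] by (simp add: T_def)
    then have "a (\<lambda>j. g j - g' j) (T g') = T g'" using that(3) by (simp add: T_def)
    then have "(\<lambda>j. g j - g' j) = (\<lambda>_. 0)" using F[OF Zd_diff[OF that(1,2)] TX[OF that(2)]] by simp
    then show ?thesis by (auto simp: fun_eq_iff dest: fun_cong)
  qed
  have orb: "\<exists>g\<in>Zd d. z = T g" if zU: "z \<in> U''" for z
  proof -
    obtain g where g: "g \<in> Zd d" "z = a g y" using zU assms(5) by (auto simp: orbit_def)
    have "T (\<lambda>j. g j - g0 j) = a (\<lambda>j. (g j - g0 j) + g0 j) y"
      using A3[OF Zd_diff[OF g(1) g0(1)] g0(1) yX] g0(2) by (simp add: T_def)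
    then have "z = T (\<lambda>j. g j - g0 j)" using g(2) by simp
    then show ?thesis using Zd_diff[OF g(1) g0(1)] by blast
  qed
  have crd: "coords d a x0 (T g) = g" if "g \<in> Zd d" for g
    unfolding coords_def using that Tinj by (intro the_equality) (auto simp: T_def)
  obtain \<delta> where dl: "\<delta> \<in> Zd d" "x1 = T \<delta>" using orb[OF assms(10)] by blast
  have crd1: "coords d a x1 (T g) = (\<lambda>i. g i - \<delta> i)" if "g \<in> Zd d" for g
    unfolding coords_def
  proof (rule the_equality)
    show "(\<lambda>i. g i - \<delta> i) \<in> Zd d \<and> a (\<lambda>i. g i - \<delta> i) x1 = T g"
      using A3[OF Zd_diff[OF that dl(1)] dl(1) x0X] dl(2) Zd_diff[OF that dl(1)] by (simp add: T_def)
  next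
    fix h assume h: "h \<in> Zd d \<and> a h x1 = T g"
    then have "T (\<lambda>j. h j + \<delta> j) = T g" using A3[of h \<delta> x0] dl x0X by (simp add: T_def)
    then have "(\<lambda>j. h j + \<delta> j) = g" using Tinj Zd_add[of h d \<delta>] h dl(1) that by blast
    then show "h = (\<lambda>i. g i - \<delta> i)" by (auto simp: fun_eq_iff algebra_simps)
  qed
  define adj where "adj = schreier_adj d X a"
  define Dx where "Dx z = (LEAST n. n = 4*d+2 \<or> (\<exists>u\<in>U. (u,z) \<in> adj ^^ n))" for z
  have Dx_ex: "Dx z = 4*d+2 \<or> (\<exists>u\<in>U. (u,z) \<in> adj ^^ Dx z)" for z
    unfolding Dx_def by (rule LeastI[of _ "4*d+2"]) simp
  have Dx_lip: "Dx z' \<le> Dx z + 1" if "(z,z') \<in> adj" for z z'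
  proof (cases "Dx z = 4*d+2")
    case True
    have "Dx z' \<le> 4*d+2" unfolding Dx_def by (rule Least_le) simp
    then show ?thesis using True by simp
  next
    case False
    then obtain u where "u \<in> U" "(u,z) \<in> adj ^^ Dx z" using Dx_ex[of z] by auto
    then have "(u,z') \<in> adj ^^ Suc (Dx z)" using that by auto
    then have "Dx z' \<le> Suc (Dx z)" unfolding Dx_def using \<open>u \<in> U\<close> by (intro Least_le) blast
    then show ?thesis by simp
  qed
  have DxU: "Dx u = 0" if "u \<in> U" for u
  proof -
    have "Dx u \<le> 0" unfolding Dx_def using that by (intro Least_le) (auto intro!: bexI[of _ u])
    then show ?thesis by simp
  qed
  have DxV: "4*d+2 \<le> Dx v" if "v \<in> V" for v
  proof (rule ccontr)
    assume "\<not> 4*d+2 \<le> Dx v"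
    then obtain u where "u \<in> U" "(u,v) \<in> adj ^^ Dx v" "Dx v \<le> 4*d+1" using Dx_ex[of v] by auto
    then show False using assms(8) that by (auto simp: path_dist_gt_def adj_def X_def)
  qed
  define Dh where "Dh g = Dx (T (rs d g))" for g
  have adj1: "(T h, T (shift m 1 h)) \<in> adj" "(T (shift m 1 h), T h) \<in> adj" if "m \<in> {1..d}" "h \<in> Zd d" for m h
  proof -
    have s: "shift m 1 h \<in> Zd d" using Zd_shift that by blast
    show "(T h, T (shift m 1 h)) \<in> adj" unfolding adj_def schreier_adj_def
      using TX[OF that(2)] TX[OF s] Tu[OF that] that(1) by (auto intro!: bexI[of _ m])
    have "a (\<lambda>j. - unitvec m j) (T (shift m 1 h)) = T h" using Tmu[OF that(1) s] by simp
    then show "(T (shift m 1 h), T h) \<in> adj" unfolding adj_def schreier_adj_def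
      using TX[OF that(2)] TX[OF s] that(1) by (auto intro!: bexI[of _ m])
  qed
  have core: "core d Dh"
  proof
    show "2 \<le> d" using assms(1) .
    fix g m assume m: "m \<in> {1..d}"
    show "Dh (shift m 1 g) \<le> Dh g + 1" "Dh g \<le> Dh (shift m 1 g) + 1"
      unfolding Dh_def rs_shift[OF m] using Dx_lip adj1[OF m rs_Zd] by blast+
  qed
  interpret C: core d Dh \<delta> by (rule core)
  have DhT: "Dh g = Dx (T g)" if "g \<in> Zd d" for g using that by (simp add: Dh_def rs_id)
  define c' where "c' e = C.CC (coords d a x0 (fst e)) (snd e)" for e
  have sedge: "\<exists>g\<in>Zd d. z = T g \<and> i \<in> {1..d} \<and> a (unitvec i) z = T (shift i 1 g)"
    if "(z,i) \<in> sedges d a U''" for z i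
  proof -
    have "z \<in> U''" "i \<in> {1..d}" using that by (auto simp: sedges_def)
    then obtain g where "g \<in> Zd d" "z = T g" using orb by blast
    then show ?thesis using Tu \<open>i \<in> {1..d}\<close> by blast
  qed
  have c'T: "c' (T g, i) = C.CC g i" if "g \<in> Zd d" for g i using crd[OF that] by (simp add: c'_def)
  have colU: "c' (z,i) = C.AA i g" if "g \<in> Zd d" "z = T g" "i \<in> {1..d}" "z \<in> U \<or> T (shift i 1 g) \<in> U" for z i g
  proof -
    have s: "shift i 1 g \<in> Zd d" using Zd_shift that by blast
    have L: "Dh (shift i 1 g) \<le> Dh g + 1" "Dh g \<le> Dh (shift i 1 g) + 1"
      using C.lip1[OF that(3), of g] C.lip2[OF that(3), of g] by auto
    have "Dh g = 0 \<or> Dh (shift i 1 g) = 0"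
      using that(4) DxU DhT[OF that(1)] DhT[OF s] that(2) by auto
    then have "Dh g \<le> 1 \<and> Dh (shift i 1 g) \<le> 1" using L by linarith
    then show ?thesis using C.col_U[OF that(3)] c'T that by simp
  qed
  have colV: "c' (z,i) = C.BB i g" if "g \<in> Zd d" "z = T g" "i \<in> {1..d}" "z \<in> V \<or> T (shift i 1 g) \<in> V" for z i g
  proof -
    have s: "shift i 1 g \<in> Zd d" using Zd_shift that by blast
    have L: "Dh (shift i 1 g) \<le> Dh g + 1" "Dh g \<le> Dh (shift i 1 g) + 1"
      using C.lip1[OF that(3), of g] C.lip2[OF that(3), of g] by auto
    have "4*d+2 \<le> Dh g \<or> 4*d+2 \<le> Dh (shift i 1 g)"
      using that(4) DxV DhT[OF that(1)] DhT[OF s] that(2) by auto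
    then have "4*d+1 \<le> Dh g \<and> 4*d+1 \<le> Dh (shift i 1 g)" using L by linarith
    then show ?thesis using C.col_V[OF that(3)] c'T that by simp
  qed
  show ?thesis
  proof (intro exI[of _ c'] conjI)
    show "is_edge_coloring d a U'' (2 * d) c'"
      unfolding is_edge_coloring_def
    proof (intro conjI ballI impI)
      fix e assume "e \<in> sedges d a U''"
      then obtain z i where zi: "e = (z,i)" "(z,i) \<in> sedges d a U''" by (cases e) auto
      then obtain g where "g \<in> Zd d" "z = T g" "i \<in> {1..d}" using sedge by blast
      then show "c' e \<in> {1..2*d}" using C.col_range c'T zi by simp
    next
      fix e f assume e: "e \<in> sedges d a U''" and f: "f \<in> sedges d a U''"
        and ef: "e \<noteq> f \<and> sends a e \<inter> sends a f \<noteq> {}"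
      obtain z i where zi: "e = (z,i)" by (cases e)
      obtain z' i' where zi': "f = (z',i')" by (cases f)
      obtain g where g: "g \<in> Zd d" "z = T g" "i \<in> {1..d}" "a (unitvec i) z = T (shift i 1 g)"
        using sedge e zi by blast
      obtain g' where g': "g' \<in> Zd d" "z' = T g'" "i' \<in> {1..d}" "a (unitvec i') z' = T (shift i' 1 g')"
        using sedge f zi' by blast
      have s: "shift i 1 g \<in> Zd d" "shift i' 1 g' \<in> Zd d" using Zd_shift g g' by blast+
      have ce: "c' e = C.CC g i" "c' f = C.CC g' i'" using c'T g g' zi zi' by auto
      have "T g = T g' \<or> T g = T (shift i' 1 g') \<or> T (shift i 1 g) = T g' \<or> T (shift i 1 g) = T (shift i' 1 g')"
        using ef zi zi' g g' by (auto simp: sends_def)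
      then show "c' e \<noteq> c' f"
      proof (elim disjE)
        assume "T g = T g'"
        then have "g = g'" using Tinj g g' by blast
        then have "i \<noteq> i'" using ef zi zi' g g' by auto
        then show ?thesis using C.vertex_distinct[OF g(3) g'(3), of True True g] ce \<open>g = g'\<close>
          by (simp add: C.ecol_def)
      next
        assume "T g = T (shift i' 1 g')"
        then have "g = shift i' 1 g'" using Tinj g s by blast
        then have "g' = shift i' (-1) g" by simp
        then show ?thesis using C.vertex_distinct[OF g(3) g'(3), of True False g] ce
          by (simp add: C.ecol_def)
      next
        assume "T (shift i 1 g) = T g'"
        then have h: "g' = shift i 1 g" using Tinj g' s by metis
        then have "g = shift i (-1) g'" by simp
        then show ?thesis using C.vertex_distinct[OF g(3) g'(3), of False True g'] ce
          by (simp add: C.ecol_def)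
      next
        assume "T (shift i 1 g) = T (shift i' 1 g')"
        then have h: "shift i 1 g = shift i' 1 g'" using Tinj s by blast
        have "i \<noteq> i'"
        proof
          assume "i = i'"
          then have "shift i (-1) (shift i 1 g) = shift i (-1) (shift i 1 g')" using h by simp
          then have "g = g'" by simp
          then show False using ef zi zi' \<open>i = i'\<close> g g' by auto
        qed
        moreover have "g = shift i (-1) (shift i 1 g)" by simp
        moreover have "g' = shift i' (-1) (shift i 1 g)" using h by simp
        ultimately show ?thesis using C.vertex_distinct[OF g(3) g'(3), of False False "shift i 1 g"] ce
          by (simp add: C.ecol_def)
      qed
    qed
  next
    show "\<forall>e\<in>sedges d a (U \<union> V). c' e = c e"
    proof
      fix e assume e: "e \<in> sedges d a (U \<union> V)"
      obtain z i where zi: "e = (z,i)" by (cases e)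
      have zU: "z \<in> U \<union> V" "i \<in> {1..d}" using e zi by (auto simp: sedges_def)
      then obtain g where g: "g \<in> Zd d" "z = T g" using orb assms(6,7) by blast
      have au: "a (unitvec i) z = T (shift i 1 g)" using Tu zU g by blast
      show "c' e = c e"
      proof (cases "z \<in> U")
        case True
        have "c e = (if even (coords d a x0 z i) then 2 * i - 1 else 2 * i)"
          using assms(12) e zi True unfolding follows_protocol_def by auto
        then show ?thesis using colU[OF g zU(2)] True zi crd g by (simp add: C.AA_def)
      next
        case False
        then have zV: "z \<in> V" using zU by simp
        have "c e = (if even (coords d a x1 z i) then 2 * i - 1 else 2 * i)"
          using assms(13) e zi zV unfolding follows_protocol_def by auto
        then show ?thesis using colV[OF g zU(2)] zV zi crd1 g by (simp add: C.BB_def)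
      qed
    qed
  next
    show "follows_protocol d a U'' c' x0 U"
      unfolding follows_protocol_def
    proof (intro ballI impI, clarify)
      fix z i assume e: "(z,i) \<in> sedges d a U''" and h: "z \<in> U \<or> a (unitvec i) z \<in> U"
      obtain g where g: "g \<in> Zd d" "z = T g" "i \<in> {1..d}" "a (unitvec i) z = T (shift i 1 g)"
        using sedge e by blast
      show "c' (z,i) = (if even (coords d a x0 z i) then 2 * i - 1 else 2 * i)"
        using colU[OF g(1,2,3)] h g crd by (simp add: C.AA_def)
    qed
  next
    show "follows_protocol d a U'' c' x1 V"
      unfolding follows_protocol_def
    proof (intro ballI impI, clarify)
      fix z i assume e: "(z,i) \<in> sedges d a U''" and h: "z \<in> V \<or> a (unitvec i) z \<in> V"
      obtain g where g: "g \<in> Zd d" "z = T g" "i \<in> {1..d}" "a (unitvec i) z = T (shift i 1 g)"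
        using sedge e by blast
      show "c' (z,i) = (if even (coords d a x1 z i) then 2 * i - 1 else 2 * i)"
        using colV[OF g(1,2,3)] h g crd1 by (simp add: C.BB_def)
    qed
  qed
qed

end
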